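(* Let $X$ be an infinite-dimensional first-countable topological vector space over $\mathbb{K}$ ($\mathbb{K}=\mathbb{R}$ or $\mathbb{C}$). Then $w(X)\le\dim(X)$.
   Context: The weight $w(X)$ is the smallest cardinality of a base for the topology of $X$; $\dim(X)$ is the (Hamel) dimension of $X$. *)

theory Defs
  imports "HOL-Analysis.Analysis"
begin

text \<open>A topological vector space structure on the whole type 'a, with scalar field 'k
  (a real normed field, i.e. R or C up to isomorphism), scalar multiplication scand
  topology T on 'a.\<close>
definition tvs :: "('k::real_normed_field \<Rightarrow> 'a::ab_group_add \<Rightarrow> 'a) \<Rightarrow> 'a topology \<Rightarrow> bool" where
  "tvs sc T \<longleftrightarrow>
     vector_space sc \<and> topspace T = UNIV \<and>
     continuous_map (prod_topology T T) T (\<lambda>(x, y). x + y) \<and>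
     continuous_map (prod_topology (euclidean :: 'k topology) T) T (\<lambda>(c, x). sc c x)"

definition is_base :: "'a topology \<Rightarrow> 'a set set \<Rightarrow> bool" where
  "is_base T \<B> \<longleftrightarrow> (\<forall>V\<in>\<B>. openin T V) \<and>
     (\<forall>U x. openin T U \<and> x \<in> U \<longrightarrow> (\<exists>V\<in>\<B>. x \<in> V \<and> V \<subseteq> U))"

definition hamel_basis :: "('k::field \<Rightarrow> 'a::ab_group_add \<Rightarrow> 'a) \<Rightarrow> 'a set \<Rightarrow> bool" where
  "hamel_basis sc H \<longleftrightarrow> \<not> module.dependent sc H \<and> module.span sc H = UNIV"

end

theory Submission
  imports Defs "HOL-Computational_Algebra.Fundamental_Theorem_Algebra" "HOL-Algebra.Free_Abelian_Groups" "HOL-Library.Countable_Set_Type"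
begin

definition ev :: "real poly \<Rightarrow> 'k::real_normed_field \<Rightarrow> 'k" where
  "ev p x = poly (map_poly of_real p) x"

lemma ev_pCons[simp]: "ev (pCons a p) x = of_real a + x * ev p x"
  by (simp add: ev_def map_poly_pCons)

lemma ev_0[simp]: "ev 0 x = 0" by (simp add: ev_def)

lemma ev_add[simp]: "ev (p + q) x = ev p x + ev q x"
proof (induction p arbitrary: q)
  case (pCons a p)
  show ?case
  proof (cases q)
    case (pCons b q')
    have "ev (p + q') x = ev p x + ev q' x" by (rule pCons.IH)
    then show ?thesis using pCons by (simp add: algebra_simps)
  qed
qed simp

lemma ev_smult[simp]: "ev (smult a p) x = of_real a * ev p x"
  by (induction p) (simp_all add: algebra_simps)

lemma ev_mult[simp]: "ev (p * q) x = ev p x * ev q x"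
  by (induction p) (simp_all add: algebra_simps)

lemma ev_minus[simp]: "ev (- p) x = - ev p x"
  by (induction p) (simp_all add: algebra_simps)

lemma ev_diff[simp]: "ev (p - q) x = ev p x - ev q x"
  using ev_add[of p "-q" x] by simp

lemma ev_1[simp]: "ev 1 x = 1" by (simp add: ev_def)

lemma ev_power[simp]: "ev (p ^ n) x = ev p x ^ n"
  by (induction n) simp_all

lemma ev_const[simp]: "ev [:c:] x = of_real c"
  by simp

lemma ev_of_real: "ev p (of_real r :: 'k::real_normed_field) = of_real (poly p r)"
  by (induction p) simp_all

lemma ev_complex_real: "ev p (complex_of_real r) = complex_of_real (poly p r)"
  by (rule ev_of_real)

definition qz :: "complex \<Rightarrow> real poly" where
  "qz z = [:Re z ^ 2 + Im z ^ 2, - 2 * Re z, 1:]"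

lemma ev_qz: "ev (qz z) x = x ^ 2 - of_real (2 * Re z) * x + of_real (Re z ^ 2 + Im z ^ 2)"
  by (simp add: qz_def algebra_simps power2_eq_square)

lemma degree_qz[simp]: "degree (qz z) = 2" by (simp add: qz_def)
lemma lc_qz[simp]: "lead_coeff (qz z) = 1" by (simp add: qz_def)

lemma coeff_qz2[simp]: "coeff (qz z) 2 = 1" by (simp add: qz_def numeral_2_eq_2)

lemma qz_nonzero[simp]: "qz z \<noteq> 0" by (simp add: qz_def)

lemma ev_qz_root: "ev (qz z) z = 0"
  by (simp add: ev_qz complex_eq_iff power2_eq_square algebra_simps)

lemma norm_ev_lower:
  fixes \<xi> :: "'k::real_normed_field"
  assumes m: "\<And>z. m \<le> norm (ev (qz z) \<xi>)" and m0: "0 \<le> m"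
  shows "p \<noteq> 0 \<Longrightarrow> \<bar>lead_coeff p\<bar> * sqrt m ^ degree p \<le> norm (ev p \<xi>)"
proof (induction "degree p" arbitrary: p rule: less_induct)
  case less
  show ?case
  proof (cases "degree p = 0")
    case True
    then obtain c where p: "p = [:c:]" by (metis degree_eq_zeroE)
    then show ?thesis by simp
  next
    case False
    have "degree (map_poly complex_of_real p) = degree p"
      by (simp add: degree_map_poly)
    then have "\<not> constant (poly (map_poly complex_of_real p))"
      using False constant_degree by metis
    then obtain z where "poly (map_poly complex_of_real p) z = 0"
      using fundamental_theorem_of_algebra by blast
    then have z: "ev p z = 0" by (simp add: ev_def)
    show ?thesis
    proof (cases "Im z = 0")
      case True
      define r where "r = Re z"
      have "z = complex_of_real r" using True by (simp add: r_def complex_eq_iff)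
      then have "poly p r = 0" using z ev_complex_real[of p r] by simp
      then obtain p' where p: "p = [:-r, 1:] * p'" using poly_eq_0_iff_dvd by (metis dvdE)
      have p'0: "p' \<noteq> 0" using less.prems p by auto
      have deg: "degree p = Suc (degree p')"
        using p p'0 degree_mult_eq[of "[:-r,1:]" p'] by simp
      have lc: "lead_coeff p = lead_coeff p'"
        using p lead_coeff_mult[of "[:-r,1:]" p'] by simp
      have IH: "\<bar>lead_coeff p'\<bar> * sqrt m ^ degree p' \<le> norm (ev p' \<xi>)"
        using less.hyps[of p'] deg p'0 by simp
      have "ev (qz (complex_of_real r)) \<xi> = (\<xi> - of_real r) ^ 2"
        by (simp add: ev_qz power2_eq_square algebra_simps)
      then have "norm (\<xi> - of_real r) ^ 2 = norm (ev (qz (complex_of_real r)) \<xi>)"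
        by (simp add: norm_power)
      then have "m \<le> norm (\<xi> - of_real r) ^ 2" using m[of "complex_of_real r"] by simp
      then have s: "sqrt m \<le> norm (\<xi> - of_real r)"
        using real_sqrt_le_mono by fastforce
      have "ev p \<xi> = ev [:-r,1:] \<xi> * ev p' \<xi>" unfolding p by (rule ev_mult)
      then have "ev p \<xi> = (\<xi> - of_real r) * ev p' \<xi>" by (simp add: algebra_simps)
      then have "norm (ev p \<xi>) = norm (\<xi> - of_real r) * norm (ev p' \<xi>)" by (simp add: norm_mult)
      moreover have "\<bar>lead_coeff p\<bar> * sqrt m ^ degree p = sqrt m * (\<bar>lead_coeff p'\<bar> * sqrt m ^ degree p')"
        using deg lc by simp
      moreover have "sqrt m * (\<bar>lead_coeff p'\<bar> * sqrt m ^ degree p') \<le> norm (\<xi> - of_real r) * norm (ev p' \<xi>)"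
        using s IH by (intro mult_mono) (auto simp: m0)
      ultimately show ?thesis by simp
    next
      case False
      define q where "q = qz z"
      have qz0: "ev q z = 0" by (simp add: q_def ev_qz_root)
      have q0: "q \<noteq> 0" using degree_qz[of z] unfolding q_def by (metis degree_0 zero_neq_numeral)
      define r where "r = p mod q"
      define p' where "p' = p div q"
      have pq: "p = q * p' + r" by (simp add: r_def p'_def)
      have rz: "ev r z = 0" using z qz0 pq by (metis add_0 ev_add ev_mult mult_zero_left)
      have "r = 0 \<or> degree r < 2" using degree_mod_less[of q p] q0 unfolding r_def q_def by auto
      then have dr: "degree r \<le> 1" by auto
      have rr: "r = pCons (coeff r 0) (pCons (coeff r 1) 0)"
      proof (rule poly_eqI)
        fix n show "coeff r n = coeff (pCons (coeff r 0) (pCons (coeff r 1) 0)) n"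
          using dr by (cases n; cases "n - 1") (auto simp: coeff_pCons intro!: coeff_eq_0)
      qed
      have "ev r z = of_real (coeff r 0) + z * of_real (coeff r 1)"
        by (subst rr) simp
      with rz have "coeff r 0 = 0 \<and> coeff r 1 = 0" using False
        by (auto simp add: complex_eq_iff)
      then have r0: "r = 0" using rr by simp
      have p: "p = q * p'" using pq r0 by simp
      have p'0: "p' \<noteq> 0" using less.prems p by auto
      have deg: "degree p = degree p' + 2" using p p'0 q0 by (simp add: degree_mult_eq q_def)
      have lc: "lead_coeff p = lead_coeff p'" using p by (simp add: lead_coeff_mult q_def)
      have IH: "\<bar>lead_coeff p'\<bar> * sqrt m ^ degree p' \<le> norm (ev p' \<xi>)"
        using less.hyps[of p'] deg p'0 by simp
      have s: "sqrt m ^ 2 \<le> norm (ev q \<xi>)" using m[of z] m0 by (simp add: q_def)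
      have "norm (ev p \<xi>) = norm (ev q \<xi>) * norm (ev p' \<xi>)" using p by (simp add: norm_mult)
      moreover have "\<bar>lead_coeff p\<bar> * sqrt m ^ degree p = sqrt m ^ 2 * (\<bar>lead_coeff p'\<bar> * sqrt m ^ degree p')"
        using deg lc m0 by (simp add: power_add)
      moreover have "sqrt m ^ 2 * (\<bar>lead_coeff p'\<bar> * sqrt m ^ degree p') \<le> norm (ev q \<xi>) * norm (ev p' \<xi>)"
        using s IH by (intro mult_mono) (auto simp: m0)
      ultimately show ?thesis by simp
    qed
  qed
qed

lemma const_power: "[:c:] ^ n = [:c ^ n:]"
  by (induction n) (auto simp: mult.commute)

lemma key_step:
  fixes \<xi> :: "'k::real_normed_field"
  assumes m: "\<And>z. m \<le> norm (ev (qz z) \<xi>)" and m0: "0 < m"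
    and z0: "norm (ev (qz z0) \<xi>) = m" and e: "0 < e" "e < m"
  shows "norm (ev (qz (Complex (Re z0) (sqrt (Im z0 ^ 2 + e)))) \<xi>) = m"
proof -
  define z1 where "z1 = Complex (Re z0) (sqrt (Im z0 ^ 2 + e))"
  define g where "g = qz z0"
  define F1 where "F1 = norm (ev (qz z1) \<xi>)"
  have sq: "sqrt (Im z0 ^ 2 + e) ^ 2 = Im z0 ^ 2 + e" using e by simp
  have q1: "qz z1 = g - [:-e:]"
    using sq by (simp add: z1_def g_def qz_def)
  have g0: "g \<noteq> 0" unfolding g_def by (metis degree_0 degree_qz zero_neq_numeral)
  have bound: "F1 * m ^ k \<le> m ^ Suc k + e ^ Suc k" for k
  proof -
    define n where "n = Suc k"
    define G where "G = g ^ n - [:-e:] ^ n"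
    obtain S where GS: "G = qz z1 * S"
      using power_diff_sumr2[of g n "[:-e:]"] q1 unfolding G_def by metis
    have gn: "degree (g ^ n) = 2 * n" using degree_power_eq[OF g0, of n] by (simp add: g_def)
    have lgn: "lead_coeff (g ^ n) = 1" by (simp add: lead_coeff_power g_def)
    have Geq: "G = g ^ n + [:- ((-e) ^ n):]" by (simp add: G_def const_power)
    have degG: "degree G = 2 * n"
      unfolding Geq using gn n_def by (subst degree_add_eq_left) auto
    have lcG: "lead_coeff G = 1"
      using degG lgn gn unfolding Geq by (simp add: n_def)
    have S0: "S \<noteq> 0" using GS degG n_def by auto
    have degS: "degree S = 2 * k"
      using degG GS S0 degree_mult_eq[of "qz z1" S] n_def by simp
    have lcS: "lead_coeff S = 1"
      using lcG GS lead_coeff_mult[of "qz z1" S] by simp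
    have "\<bar>lead_coeff S\<bar> * sqrt m ^ degree S \<le> norm (ev S \<xi>)"
      using norm_ev_lower[of m \<xi> S] m m0 S0 by simp
    moreover have "coeff S (2 * k) = 1" using lcS degS by simp
    ultimately have lowS: "m ^ k \<le> norm (ev S \<xi>)"
      using m0 by (simp add: degS power_mult)
    have "norm (ev G \<xi>) = F1 * norm (ev S \<xi>)"
      unfolding GS F1_def by (simp add: norm_mult)
    moreover have "F1 * m ^ k \<le> F1 * norm (ev S \<xi>)"
      using lowS by (intro mult_left_mono) (auto simp: F1_def)
    moreover have "ev G \<xi> = ev g \<xi> ^ n - of_real ((-e) ^ n)"
      unfolding G_def by (simp add: const_power)
    then have "norm (ev G \<xi>) \<le> norm (ev g \<xi>) ^ n + e ^ n"
      by (metis (no_types, lifting) norm_of_real norm_power norm_triangle_ineq4 power_abs abs_minus_cancel abs_of_pos e(1))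
    ultimately show ?thesis using z0 by (simp add: g_def n_def)
  qed
  have "F1 \<le> m"
  proof (rule ccontr)
    assume "\<not> F1 \<le> m"
    then have d: "0 < (F1 - m) / e" using e by simp
    have "e / m < 1" using e by simp
    then obtain k where k: "(e / m) ^ k < (F1 - m) / e" using real_arch_pow_inv d by blast
    have "F1 * m ^ k \<le> m * m ^ k + e * e ^ k" using bound[of k] by simp
    then have "F1 \<le> m + e * (e / m) ^ k"
      using m0 by (simp add: field_simps power_divide)
    also have "\<dots> < m + e * ((F1 - m) / e)"
      using k e by (intro add_strict_left_mono mult_strict_left_mono) auto
    also have "\<dots> = F1" using e by simp
    finally show False by simp
  qed
  then show ?thesis using m[of z1] by (simp add: F1_def z1_def)
qed

lemma coercive:
  fixes \<xi> :: "'k::real_normed_field"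
  shows "cmod z ^ 2 - 2 * cmod z * norm \<xi> - norm \<xi> ^ 2 \<le> norm (ev (qz z) \<xi>)"
proof -
  have n1: "norm (of_real (Re z ^ 2 + Im z ^ 2) :: 'k) = cmod z ^ 2"
    unfolding norm_of_real cmod_power2 by simp
  have n2: "norm (of_real (2 * Re z) * \<xi>) \<le> 2 * cmod z * norm \<xi>"
    using abs_Re_le_cmod[of z] by (simp add: norm_mult mult_right_mono)
  have n3: "norm (\<xi> ^ 2) = norm \<xi> ^ 2" by (simp add: norm_power)
  have "norm (of_real (Re z ^ 2 + Im z ^ 2) :: 'k) \<le> norm (ev (qz z) \<xi>) + norm (of_real (2 * Re z) * \<xi>) + norm (\<xi> ^ 2)"
    unfolding ev_qz by (smt (verit, ccfv_SIG) diff_add_cancel norm_minus_commute norm_triangle_ineq4 add_diff_cancel_left' norm_triangle_ineq)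
  then show ?thesis using n1 n2 n3 by linarith
qed

lemma coercive2:
  fixes \<xi> :: "'k::real_normed_field"
  shows "\<exists>R\<ge>0. \<forall>z. R < cmod z \<longrightarrow> M < norm (ev (qz z) \<xi>)"
proof -
  define a where "a = norm \<xi>"
  define R where "R = a + sqrt (\<bar>M\<bar> + 2 * a ^ 2)"
  have a0: "a \<ge> 0" by (simp add: a_def)
  have "\<forall>z. R < cmod z \<longrightarrow> M < norm (ev (qz z) \<xi>)"
  proof (intro allI impI)
    fix z assume z: "R < cmod z"
    then have "sqrt (\<bar>M\<bar> + 2 * a ^ 2) < cmod z - a" by (simp add: R_def)
    then have "sqrt (\<bar>M\<bar> + 2 * a ^ 2) ^ 2 < (cmod z - a) ^ 2"
      by (intro power_strict_mono) auto
    then have "\<bar>M\<bar> + 2 * a ^ 2 < (cmod z - a) ^ 2" by simp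
    then have "M < cmod z ^ 2 - 2 * cmod z * a - a ^ 2"
      by (simp add: power2_eq_square algebra_simps)
    then show "M < norm (ev (qz z) \<xi>)" using coercive[of z \<xi>] by (simp add: a_def)
  qed
  moreover have "R \<ge> 0" using a0 by (simp add: R_def)
  ultimately show ?thesis by blast
qed

lemma quad_root:
  fixes \<xi> :: "'k::real_normed_field"
  shows "\<exists>z. ev (qz z) \<xi> = 0"
proof -
  define F where "F z = norm (ev (qz z) \<xi>)" for z
  obtain R where R: "R \<ge> 0" "\<forall>z. R < cmod z \<longrightarrow> F 0 < F z"
    using coercive2[where \<xi>=\<xi> and M="F 0"] unfolding F_def by blast
  have cont: "continuous_on (cball 0 R) F" unfolding F_def ev_qz
    by (intro continuous_intros)
  obtain z0 where z0: "z0 \<in> cball 0 R" "\<forall>y\<in>cball 0 R. F z0 \<le> F y"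
    using continuous_attains_inf[OF compact_cball _ cont] R by auto
  have min: "F z0 \<le> F z" for z
  proof (cases "z \<in> cball 0 R")
    case True then show ?thesis using z0 by auto
  next
    case False
    then have "F 0 < F z" using R by auto
    moreover have "F z0 \<le> F 0" using z0 R by auto
    ultimately show ?thesis by simp
  qed
  define m where "m = F z0"
  show ?thesis
  proof (rule ccontr)
    assume "\<not> ?thesis"
    then have m0: "m > 0" by (simp add: m_def F_def)
    define e where "e = m / 2"
    have e: "0 < e" "e < m" using m0 by (auto simp: e_def)
    define zs where "zs k = Complex (Re z0) (sqrt (Im z0 ^ 2 + real k * e))" for k
    have zs: "F (zs k) = m \<and> Im (zs k) ^ 2 = Im z0 ^ 2 + real k * e" for k
    proof (induction k)
      case 0
      have "zs 0 = Complex (Re z0) \<bar>Im z0\<bar>" by (simp add: zs_def)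
      have "Im (zs 0) ^ 2 = Im z0 ^ 2" by (simp add: zs_def)
      moreover have "F (zs 0) = m"
      proof -
        have "qz (zs 0) = qz z0" by (simp add: qz_def zs_def)
        then show ?thesis by (simp add: m_def F_def)
      qed
      ultimately show ?case by simp
    next
      case (Suc k)
      have eq: "zs (Suc k) = Complex (Re (zs k)) (sqrt (Im (zs k) ^ 2 + e))"
        using Suc.IH by (simp add: zs_def algebra_simps)
      have "F (zs (Suc k)) = m"
        unfolding eq F_def
        by (rule key_step[OF _ m0 _ e]) (use min Suc.IH in \<open>auto simp: F_def m_def\<close>)
      moreover have "Im (zs (Suc k)) ^ 2 = Im z0 ^ 2 + real (Suc k) * e"
        using e by (simp add: zs_def algebra_simps)
      ultimately show ?case by simp
    qed
    obtain R' where R': "\<forall>z. R' < cmod z \<longrightarrow> m < F z"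
      using coercive2[where \<xi>=\<xi> and M=m] unfolding F_def by blast
    obtain k where k: "R' ^ 2 < real k * e"
      using reals_Archimedean3[OF e(1)] by blast
    have "R' ^ 2 < Im (zs k) ^ 2" using zs[of k] k by (smt (verit) zero_le_power2)
    then have "\<bar>R'\<bar> < \<bar>Im (zs k)\<bar>" using abs_less_iff power2_less_imp_less
      by (metis abs_ge_zero power2_abs)
    then have "R' < cmod (zs k)" using abs_Im_le_cmod[of "zs k"] by linarith
    then show False using R' zs[of k] by auto
  qed
qed

lemma k_dense:
  "\<exists>C::'k::real_normed_field set. countable C \<and> C \<noteq> {} \<and> (\<forall>\<xi> e. 0 < e \<longrightarrow> (\<exists>c\<in>C. dist c \<xi> < e))"
proof -
  define J where "J = {j::'k. j ^ 2 = -1}"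
  have "J \<subseteq> {x. poly [:1, 0, 1:] x = 0}"
    by (auto simp: J_def power2_eq_square)
  moreover have "finite {x::'k. poly [:1, 0, 1:] x = 0}"
    by (rule poly_roots_finite) simp
  ultimately have fJ: "finite J" by (rule finite_subset)
  define C where "C = (\<lambda>(a, b, j). of_real a + of_real b * j) ` (\<rat> \<times> \<rat> \<times> J) \<union> of_real ` \<rat>"
  have "countable C" unfolding C_def
    using countable_rat fJ by (intro countable_Un countable_image countable_SIGMA) (auto intro: countable_finite)
  moreover have "C \<noteq> {}" unfolding C_def by auto
  moreover have "\<exists>c\<in>C. dist c \<xi> < e" if e: "0 < e" for \<xi> :: 'k and e
  proof -
    obtain z where "ev (qz z) \<xi> = 0" using quad_root by blast
    define a where "a = Re z"
    define b where "b = Im z"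
    have eq: "(\<xi> - of_real a) ^ 2 = - of_real (b ^ 2)"
      using \<open>ev (qz z) \<xi> = 0\<close> unfolding ev_qz a_def b_def
      by (simp add: power2_eq_square algebra_simps)
    show ?thesis
    proof (cases "b = 0")
      case True
      then have "\<xi> = of_real a" using eq by simp
      obtain q where q: "q \<in> \<rat>" "a - e < q" "q < a + e"
        using Rats_dense_in_real[of "a - e" "a + e"] e by auto
      have "dist (of_real q) \<xi> < e" using q \<open>\<xi> = of_real a\<close>
        by (simp add: dist_norm flip: of_real_diff)
      moreover have "of_real q \<in> C" using q by (auto simp: C_def)
      ultimately show ?thesis by blast
    next
      case False
      define j where "j = (\<xi> - of_real a) / of_real b"
      have j2: "j ^ 2 = -1" using eq False
        by (simp add: j_def power_divide)
      then have jJ: "j \<in> J" by (simp add: J_def)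
      have "norm j ^ 2 = 1" using j2 by (metis norm_minus_cancel norm_one norm_power)
      then have nj: "norm j = 1" using norm_ge_zero[of j] by (auto simp add: power2_eq_1_iff)
      have xi: "\<xi> = of_real a + of_real b * j" using False by (simp add: j_def)
      obtain q1 where q1: "q1 \<in> \<rat>" "a - e/2 < q1" "q1 < a + e/2"
        using Rats_dense_in_real[of "a - e/2" "a + e/2"] e by auto
      obtain q2 where q2: "q2 \<in> \<rat>" "b - e/2 < q2" "q2 < b + e/2"
        using Rats_dense_in_real[of "b - e/2" "b + e/2"] e by auto
      define c where "c = of_real q1 + of_real q2 * j"
      have "c \<in> C" using q1 q2 jJ unfolding C_def c_def by force
      have "c - \<xi> = of_real (q1 - a) + of_real (q2 - b) * j"
        by (simp add: c_def xi algebra_simps)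
      then have "norm (c - \<xi>) \<le> \<bar>q1 - a\<bar> + \<bar>q2 - b\<bar>"
        using norm_triangle_ineq[of "of_real (q1 - a) :: 'k" "of_real (q2 - b) * j"]
        by (simp add: norm_mult nj del: of_real_diff)
      also have "\<dots> < e" using q1 q2 by auto
      finally show ?thesis using \<open>c \<in> C\<close> by (auto simp: dist_norm)
    qed
  qed
  ultimately show ?thesis by blast
qed

lemma tvs_facts:
  fixes sc :: "'k::real_normed_field \<Rightarrow> 'a::ab_group_add \<Rightarrow> 'a"
  assumes "tvs sc T"
  shows "vector_space sc" "topspace T = UNIV"
    "continuous_map (prod_topology T T) T (\<lambda>(x, y). x + y)"
    "continuous_map (prod_topology (euclidean :: 'k topology) T) T (\<lambda>(c, x). sc c x)"
  using assms by (auto simp: tvs_def)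

lemma tvs_add2:
  assumes "tvs (sc :: 'k::real_normed_field \<Rightarrow> 'a::ab_group_add \<Rightarrow> 'a) T"
    "continuous_map X T f" "continuous_map X T g"
  shows "continuous_map X T (\<lambda>x. f x + g x)"
proof -
  have "continuous_map X (prod_topology T T) (\<lambda>x. (f x, g x))"
    using assms by (intro continuous_map_pairedI)
  from continuous_map_compose[OF this tvs_facts(3)[OF assms(1)]] show ?thesis
    by (simp add: o_def)
qed

lemma tvs_scale2:
  assumes "tvs (sc :: 'k::real_normed_field \<Rightarrow> 'a::ab_group_add \<Rightarrow> 'a) T"
    "continuous_map X euclidean f" "continuous_map X T g"
  shows "continuous_map X T (\<lambda>x. sc (f x) (g x))"
proof -
  have "continuous_map X (prod_topology euclidean T) (\<lambda>x. (f x, g x))"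
    using assms by (intro continuous_map_pairedI)
  from continuous_map_compose[OF this tvs_facts(4)[OF assms(1)]] show ?thesis
    by (simp add: o_def)
qed

lemma tvs_const:
  assumes "tvs (sc :: 'k::real_normed_field \<Rightarrow> 'a::ab_group_add \<Rightarrow> 'a) T"
  shows "continuous_map X T (\<lambda>x. a)"
  using tvs_facts(2)[OF assms] by simp

lemma cm_ident: "continuous_map X X (\<lambda>x. x)"
  using continuous_map_id[of X] unfolding id_def .

lemma tvs_neg:
  assumes "tvs (sc :: 'k::real_normed_field \<Rightarrow> 'a::ab_group_add \<Rightarrow> 'a) T"
    "continuous_map X T g"
  shows "continuous_map X T (\<lambda>x. - g x)"
proof -
  interpret V: vector_space sc using tvs_facts(1)[OF assms(1)] .
  have "(\<lambda>x. - g x) = (\<lambda>x. sc (-1) (g x))" by (simp add: V.scale_minus_left)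
  moreover have "continuous_map X T (\<lambda>x. sc (-1) (g x))"
    by (rule tvs_scale2[OF assms(1) _ assms(2)]) simp
  ultimately show ?thesis by simp
qed

theorem theorem3p6:
  fixes sc :: "'k::real_normed_field \<Rightarrow> 'a::ab_group_add \<Rightarrow> 'a"
    and T :: "'a topology"
  assumes "tvs sc T"
    and "first_countable T"
    and "\<not> (\<exists>S. finite S \<and> module.span sc S = UNIV)"
    and "hamel_basis sc H"
  shows "\<exists>\<B>. is_base T \<B> \<and> (card_of \<B>, card_of H) \<in> ordLeq"
proof -
  note tv = tvs_facts[OF assms(1)]
  interpret V: vector_space sc using tv(1) .
  have spanH: "V.span H = UNIV" using assms(4) by (simp add: hamel_basis_def)
  have H_inf: "infinite H" using assms(3) spanH by blast
  obtain C :: "'k set" where C: "countable C" "C \<noteq> {}"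
    "\<And>\<xi> e. 0 < e \<Longrightarrow> \<exists>c\<in>C. dist c \<xi> < e"
    using k_dense by blast
  have clC: "euclidean closure_of C = UNIV"
    using C(3) by (auto simp: closure_approachable)
  define f where "f L = sum_list (map (\<lambda>(h, c). sc c h) L)" for L
  define D where "D = f ` lists (H \<times> C)"
  have D0: "0 \<in> D" unfolding D_def f_def by (rule image_eqI[of _ _ "[]"]) auto
  have Dadd: "x + y \<in> D" if xy: "x \<in> D" "y \<in> D" for x y
  proof -
    obtain L1 L2 where "L1 \<in> lists (H \<times> C)" "L2 \<in> lists (H \<times> C)" "x = f L1" "y = f L2"
      using xy unfolding D_def by blast
    then show ?thesis unfolding D_def f_def by (intro image_eqI[of _ _ "L1 @ L2"]) auto
  qed
  have Dsc: "sc c h \<in> D" if "h \<in> H" "c \<in> C" for h c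
    unfolding D_def f_def using that by (intro image_eqI[of _ _ "[(h, c)]"]) auto
  define E where "E = T closure_of D"
  have DE: "D \<subseteq> E" unfolding E_def by (rule closure_of_subset) (simp add: tv(2))
  have Eadd: "x + y \<in> E" if "x \<in> E" "y \<in> E" for x y
  proof -
    have "(\<lambda>(x,y). x+y) ` (prod_topology T T closure_of (D \<times> D)) \<subseteq> T closure_of ((\<lambda>(x,y). x+y) ` (D \<times> D))"
      by (rule continuous_map_image_closure_subset[OF tv(3)])
    moreover have "(\<lambda>(x,y). x+y) ` (D \<times> D) \<subseteq> D" using Dadd by auto
    then have "T closure_of ((\<lambda>(x,y). x+y) ` (D \<times> D)) \<subseteq> E" unfolding E_def by (rule closure_of_mono)
    moreover have "(x, y) \<in> prod_topology T T closure_of (D \<times> D)"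
      using that unfolding closure_of_Times E_def by simp
    ultimately show ?thesis by blast
  qed
  have Esc: "sc c h \<in> E" if "h \<in> H" for h c
  proof -
    have cm: "continuous_map euclidean T (\<lambda>c. sc c h)"
      by (rule tvs_scale2[OF assms(1) cm_ident tvs_const[OF assms(1)]])
    have "(\<lambda>c. sc c h) ` (euclidean closure_of C) \<subseteq> T closure_of ((\<lambda>c. sc c h) ` C)"
      by (rule continuous_map_image_closure_subset[OF cm])
    moreover have "(\<lambda>c. sc c h) ` C \<subseteq> D" using Dsc that by auto
    then have "T closure_of ((\<lambda>c. sc c h) ` C) \<subseteq> E" unfolding E_def by (rule closure_of_mono)
    ultimately show ?thesis using clC by blast
  qed
  have Eall: "x \<in> E" for x
  proof -
    have "x \<in> V.span H" using spanH by simp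
    then show ?thesis
    proof (induction rule: V.span_induct_alt)
      case base then show ?case using D0 DE by blast
    next
      case (step c x y) then show ?case using Eadd Esc by blast
    qed
  qed
  have cC: "|C| \<le>o |H|"
    using C(1) H_inf countable_card_of_nat infinite_iff_card_of_nat ordLeq_transitive by blast
  have HC_inf: "infinite (H \<times> C)" using H_inf C(2) finite_cartesian_productD1 by blast
  have "|D| \<le>o |lists (H \<times> C)|" unfolding D_def by (rule card_of_image)
  moreover have "|lists (H \<times> C)| =o |H \<times> C|" using HC_inf by (rule card_of_lists_infinite)
  moreover have "|H \<times> C| \<le>o |H|"
    using H_inf card_of_mono1[of H H] cC by (intro card_of_Times_ordLeq_infinite) auto
  ultimately have cD: "|D| \<le>o |H|"
    using ordLeq_ordIso_trans ordLeq_transitive by blast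
  have "\<exists>B0. countable B0 \<and> (\<forall>V\<in>B0. openin T V) \<and>
    (\<forall>U. openin T U \<and> 0 \<in> U \<longrightarrow> (\<exists>V\<in>B0. 0 \<in> V \<and> V \<subseteq> U))"
    using assms(2) tv(2) unfolding first_countable_def by blast
  then obtain B0 where B0: "countable B0" "\<forall>V\<in>B0. openin T V"
    "\<forall>U. openin T U \<and> 0 \<in> U \<longrightarrow> (\<exists>V\<in>B0. 0 \<in> V \<and> V \<subseteq> U)"
    by blast
  have cB0: "|B0| \<le>o |H|"
    using B0(1) H_inf countable_card_of_nat infinite_iff_card_of_nat ordLeq_transitive by blast
  define BB where "BB = (\<lambda>(d, V). (\<lambda>y. d + y) ` V) ` (D \<times> B0)"
  have "|BB| \<le>o |D \<times> B0|" unfolding BB_def by (rule card_of_image)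
  moreover have "|D \<times> B0| \<le>o |H|" using H_inf cD cB0 by (rule card_of_Times_ordLeq_infinite)
  ultimately have card: "|BB| \<le>o |H|" using ordLeq_transitive by blast
  have base: "is_base T BB"
    unfolding is_base_def
  proof (intro conjI ballI allI impI)
    fix W assume "W \<in> BB"
    then obtain d V where W: "W = (\<lambda>y. d + y) ` V" "V \<in> B0" unfolding BB_def by auto
    have "W = {y \<in> topspace T. y + - d \<in> V}"
    proof -
      have "y \<in> (\<lambda>y. d + y) ` V" if "y + - d \<in> V" for y
        using that by (intro image_eqI[of _ _ "y + - d"]) (auto simp: algebra_simps)
      then show ?thesis unfolding W tv(2) by (auto simp: algebra_simps)
    qed
    moreover have "continuous_map T T (\<lambda>y. y + - d)"
      by (rule tvs_add2[OF assms(1) cm_ident tvs_const[OF assms(1)]])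
    ultimately show "openin T W" using openin_continuous_map_preimage B0(2) W(2) by metis
  next
    fix U x assume Ux: "openin T U \<and> x \<in> U"
    define \<psi> where "\<psi> p = x + fst p + - snd p" for p :: "'a \<times> 'a"
    have c\<psi>: "continuous_map (prod_topology T T) T \<psi>"
      unfolding \<psi>_def
      by (intro tvs_add2[OF assms(1)] tvs_neg[OF assms(1)] tvs_const[OF assms(1)]
          continuous_map_fst continuous_map_snd)
    define P where "P = {p \<in> topspace (prod_topology T T). \<psi> p \<in> U}"
    have oP: "openin (prod_topology T T) P"
      unfolding P_def using c\<psi> Ux by (intro openin_continuous_map_preimage) auto
    have P0: "(0, 0) \<in> P" unfolding P_def \<psi>_def using Ux tv(2) by simp
    have "\<forall>a b. (a, b) \<in> P \<longrightarrow> (\<exists>W1 W2. openin T W1 \<and> openin T W2 \<and> a \<in> W1 \<and> b \<in> W2 \<and> W1 \<times> W2 \<subseteq> P)"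
      using oP by (simp only: openin_prod_topology_alt)
    then have "\<exists>W1 W2. openin T W1 \<and> openin T W2 \<and> 0 \<in> W1 \<and> 0 \<in> W2 \<and> W1 \<times> W2 \<subseteq> P"
      using P0 by blast
    then obtain W1 W2 where W: "openin T W1" "openin T W2" "0 \<in> W1" "0 \<in> W2" "W1 \<times> W2 \<subseteq> P"
      by blast
    have "openin T (W1 \<inter> W2)" "0 \<in> W1 \<inter> W2" using W by auto
    then obtain V where V: "V \<in> B0" "0 \<in> V" "V \<subseteq> W1 \<inter> W2" using B0(3) by blast
    have "continuous_map T T (\<lambda>y. x + - y)"
      by (intro tvs_add2[OF assms(1)] tvs_neg[OF assms(1)] tvs_const[OF assms(1)] cm_ident)
    then have oS: "openin T {y \<in> topspace T. x + - y \<in> V}"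
      using openin_continuous_map_preimage B0(2) V(1) by metis
    have xS: "x \<in> {y \<in> topspace T. x + - y \<in> V}" using V(2) tv(2) by simp
    have "x \<in> (T closure_of D)" using Eall[of x] unfolding E_def .
    then have cl: "\<forall>S. x \<in> S \<and> openin T S \<longrightarrow> (\<exists>y. y \<in> D \<and> y \<in> S)"
      by (simp add: in_closure_of)
    have "\<exists>y. y \<in> D \<and> y \<in> {y \<in> topspace T. x + - y \<in> V}"
      using cl[rule_format, OF conjI[OF xS oS]] .
    then obtain d where d: "d \<in> D" "x + - d \<in> V" by blast
    show "\<exists>W\<in>BB. x \<in> W \<and> W \<subseteq> U"
    proof (intro bexI conjI)
      show "(\<lambda>y. d + y) ` V \<in> BB" unfolding BB_def
        by (rule image_eqI[of _ _ "(d, V)"]) (use d V in auto)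
      show "x \<in> (\<lambda>y. d + y) ` V" using d by (intro image_eqI[of _ _ "x + - d"]) (auto simp: algebra_simps)
      show "(\<lambda>y. d + y) ` V \<subseteq> U"
      proof
        fix y assume "y \<in> (\<lambda>y. d + y) ` V"
        then obtain v where v: "v \<in> V" "y = d + v" by auto
        have "(v, x + - d) \<in> P" using W(5) V(3) v(1) d(2) by blast
        moreover have "\<psi> (v, x + - d) = y" unfolding \<psi>_def v(2) by (simp add: algebra_simps)
        ultimately show "y \<in> U" unfolding P_def by auto
      qed
    qed
  qed
  show ?thesis using base card by blast
qed

end
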